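(* Let $p=p(n)\le 1/2$ with $np\to\infty$, let $N=N(n)$ be an integer with $n-\sqrt n\le N\le n$, and let $d=d(n)$ be an integer with $d\ge np/2$. Let $A_1,\dots,A_d,B_1,\dots,B_d$ be independent $\mathrm{Bin}(N,p)$ random variables. Then the probability that the multisets $\{A_1,\dots,A_d\}$ and $\{B_1,\dots,B_d\}$ are equal is at most $\exp\big(-\Omega(\sqrt{np}\,\log(np))\big)$. *)

theory Defs
  imports "HOL-Probability.Probability"
begin

definition bin_vec :: "nat \<Rightarrow> nat \<Rightarrow> real \<Rightarrow> (nat \<Rightarrow> nat) pmf" where
  "bin_vec d N p = Pi_pmf {..<d} 0 (\<lambda>_. binomial_pmf N p)"

definition multiset_eq_prob :: "nat \<Rightarrow> nat \<Rightarrow> real \<Rightarrow> real" where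
  "multiset_eq_prob d N p =
     measure_pmf.prob (pair_pmf (bin_vec d N p) (bin_vec d N p))
       {(a, b). image_mset a (mset_set {..<d}) = image_mset b (mset_set {..<d})}"

end

theory Submission
  imports Defs "HOL-Combinatorics.Multiset_Permutations" "HOL-Real_Asymp.Real_Asymp"
begin


lemma ln_1p_upper:
  fixes x :: real assumes "x \<ge> 0"
  shows "ln (1 + x) \<le> x - x^2/2 + x^3/3"
proof -
  let ?f = "\<lambda>x::real. x - x^2/2 + x^3/3 - ln (1 + x)"
  have "?f 0 \<le> ?f x"
  proof (rule DERIV_nonneg_imp_nondecreasing[OF assms])
    fix y :: real assume y0: "0 \<le> y" "y \<le> x"
    hence y: "0 \<le> y \<and> y \<le> x" by simp
    have "(?f has_real_derivative (1 - y + y^2 - 1/(1+y))) (at y)"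
      using y by (auto intro!: derivative_eq_intros simp: power2_eq_square)
    moreover have "1 - y + y^2 - 1/(1+y) \<ge> 0"
    proof -
      have "1 - y + y^2 - 1/(1+y) = y^3/(1+y)" using y by (simp add: field_simps power2_eq_square power3_eq_cube)
      thus ?thesis using y by simp
    qed
    ultimately show "\<exists>d. (?f has_real_derivative d) (at y) \<and> 0 \<le> d" by blast
  qed
  thus ?thesis by simp
qed

lemma stirling_lower_ln:
  assumes "c \<ge> 1"
  shows "ln (fact c) \<ge> (real c + 1/2) * ln (real c) - real c + 1/(2 * real c)"
  using assms
proof (induction c rule: dec_induct)
  case base thus ?case by simp
next
  case (step c)
  define x where "x = 1 / real c"
  have c1: "real c \<ge> 1" using step by simp
  have x0: "x > 0" "x \<le> 1" using c1 by (auto simp: x_def)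
  have key: "(real c + 1/2) * ln (1 + x) \<le> 1 + 1/(2*real c) - 1/(2 * real (Suc c))"
  proof -
    have "(real c + 1/2) * ln (1 + x) \<le> (real c + 1/2) * (x - x^2/2 + x^3/3)"
      using ln_1p_upper[of x] x0 by (intro mult_left_mono) auto
    also have "\<dots> = 1 + x^2/12 + x^3/6" using c1
      by (simp add: x_def field_simps power2_eq_square power3_eq_cube)
    also have "\<dots> \<le> 1 + x^2/4"
    proof -
      have "x^3 \<le> x^2" using x0 by (simp add: power3_eq_cube power2_eq_square mult_left_le_one_le)
      thus ?thesis by simp
    qed
    also have "\<dots> \<le> 1 + 1/(2*real c) - 1/(2 * real (Suc c))"
    proof -
      have e1: "1/(2*real c) - 1/(2 * real (Suc c)) = 1/(2*real c*(real c+1))"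
        using c1 by (simp add: field_simps)
      have e2: "x^2/4 = 1/(4*real c*real c)" by (simp add: x_def power2_eq_square)
      have "1/(4*real c*real c) \<le> 1/(2*real c*(real c+1))"
        using c1 by (intro divide_left_mono) (auto simp: algebra_simps intro!: add_pos_pos mult_pos_pos)
      thus ?thesis using e1 e2 by simp
    qed
    finally show ?thesis .
  qed
  have lnsplit: "ln (real (Suc c)) = ln (real c) + ln (1 + x)"
  proof -
    have "real (Suc c) = real c * (1 + x)" using c1 by (simp add: x_def field_simps)
    thus ?thesis using c1 x0 by (simp add: ln_mult del: of_nat_Suc)
  qed
  have "ln (fact (Suc c)) = ln (fact c) + ln (real (Suc c))"
    by (simp add: ln_mult del: of_nat_Suc)
  also have "\<dots> \<ge> (real c + 1/2) * ln (real c) - real c + 1/(2 * real c) + ln (real (Suc c))"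
    using step.IH by simp
  finally have "ln (fact (Suc c)) \<ge> (real c + 1/2) * ln (real c) - real c + 1/(2 * real c) + ln (real (Suc c))" .
  moreover have "(real c + 1/2) * ln (real c) - real c + 1/(2 * real c) + ln (real (Suc c))
     \<ge> (real (Suc c) + 1/2) * ln (real (Suc c)) - real (Suc c) + 1/(2 * real (Suc c))"
    using key unfolding lnsplit by (simp add: algebra_simps)
  ultimately show ?case by linarith
qed

lemma stirling_lower:
  assumes "c \<ge> 1"
  shows "fact c \<ge> sqrt (real c) * (real c / exp 1) ^ c"
proof -
  have c1: "real c \<ge> 1" using assms by simp
  have "ln (sqrt (real c) * (real c / exp 1) ^ c) = (real c + 1/2) * ln (real c) - real c"
    using c1 by (simp add: ln_mult ln_powr ln_sqrt ln_div ln_realpow algebra_simps)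
  also have "\<dots> \<le> ln (fact c)" using stirling_lower_ln[OF assms] c1
    by (smt (verit) divide_nonneg_nonneg)
  finally show ?thesis using c1 by (subst (asm) ln_le_cancel_iff) auto
qed

lemma stirling_upper:
  assumes "d \<ge> 1"
  shows "fact d \<le> exp 1 * real d * (real d / exp 1) ^ d"
proof -
  have "ln (fact d) \<le> (real d + 1) * ln (real d) - real d + 1"
    using assms
  proof (induction d rule: dec_induct)
    case base thus ?case by simp
  next
    case (step d)
    have d1: "real d \<ge> 1" using step by simp
    have "ln (real d / real (Suc d)) \<le> real d / real (Suc d) - 1"
      using d1 by (intro ln_le_minus_one) auto
    also have "\<dots> = - 1 / real (Suc d)" by (simp add: field_simps)
    finally have h: "ln (real d) - ln (real (Suc d)) \<le> -1 / real (Suc d)"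
      using d1 by (simp add: ln_div del: of_nat_Suc)
    have h2: "real (Suc d) * (ln (real d) - ln (real (Suc d))) \<le> -1"
      using mult_left_mono[OF h, of "real (Suc d)"] by (simp del: of_nat_Suc)
    have "ln (fact (Suc d)) = ln (fact d) + ln (real (Suc d))"
      by (simp add: ln_mult del: of_nat_Suc)
    also have "\<dots> \<le> (real d + 1) * ln (real d) - real d + 1 + ln (real (Suc d))"
      using step.IH by simp
    also have "\<dots> \<le> (real (Suc d) + 1) * ln (real (Suc d)) - real (Suc d) + 1"
      using h2 by (simp add: algebra_simps)
    finally show ?case .
  qed
  also have "\<dots> = ln (exp 1 * real d * (real d / exp 1) ^ d)"
    using assms by (simp add: ln_mult ln_div ln_realpow algebra_simps)
  finally show ?thesis using assms by (subst (asm) ln_le_cancel_iff) auto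
qed




lemma pois_aux:
  fixes l :: real
  assumes "c \<ge> 1" "l > 0"
  shows "exp (-l) * l ^ c / fact c \<le> exp (real c * ln (l / real c) + real c - l) / sqrt (real c)"
proof -
  have c1: "real c \<ge> 1" using assms by simp
  have pos: "sqrt (real c) * (real c / exp 1) ^ c > 0" using c1 by auto
  have A: "exp (-l) * l ^ c / fact c \<le> exp (-l) * l ^ c / (sqrt (real c) * (real c / exp 1) ^ c)"
    using stirling_lower[OF assms(1)] pos assms by (intro divide_left_mono) auto
  have B: "l ^ c / (real c / exp 1) ^ c = exp (real c * ln (l / real c) + real c)"
  proof -
    have "l ^ c / (real c / exp 1) ^ c = (l * exp 1 / real c) ^ c" by (simp add: power_divide field_simps)
    also have "\<dots> = exp (real c * ln (l * exp 1 / real c))"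
    proof -
      have "l * exp 1 / real c > 0" using assms c1 by auto
      thus ?thesis by (simp add: exp_of_nat_mult)
    qed
    also have "ln (l * exp 1 / real c) = ln (l / real c) + 1" using assms c1
      by (simp add: ln_mult ln_div)
    finally show ?thesis by (simp add: algebra_simps)
  qed
  have C: "exp (-l) * l ^ c / (sqrt (real c) * (real c / exp 1) ^ c) =
      exp (-l) * (l ^ c / (real c / exp 1) ^ c) / sqrt (real c)"
    by (simp del: power_divide)
  have D: "exp (-l) * exp (real c * ln (l / real c) + real c) = exp (real c * ln (l / real c) + real c - l)"
    by (simp add: exp_add[symmetric])
  show ?thesis using A unfolding C B D .
qed

lemma pois_exponent_le0:
  fixes l :: real
  assumes "c \<ge> 1" "l > 0"
  shows "real c * ln (l / real c) + real c - l \<le> 0"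
proof -
  have c1: "real c \<ge> 1" using assms by simp
  have "ln (l / real c) \<le> l / real c - 1" using assms c1 by (intro ln_le_minus_one) auto
  hence "real c * ln (l / real c) \<le> real c * (l / real c - 1)" using c1 by (intro mult_left_mono) auto
  thus ?thesis using c1 by (simp add: algebra_simps)
qed

lemma pois_exponent_small:
  fixes l :: real
  assumes "c \<ge> 1" "4 * real c \<le> l"
  shows "real c * ln (l / real c) + real c - l \<le> - l / 4"
proof -
  have c1: "real c \<ge> 1" using assms by simp
  define x where "x = l / real c"
  have x4: "x \<ge> 4" using assms c1 by (simp add: x_def field_simps)
  have "ln (x/2) \<le> x/2 - 1" using x4 by (intro ln_le_minus_one) auto
  moreover have "ln (x/2) = ln x - ln 2" using x4 by (simp add: ln_div)
  moreover have "ln (2::real) \<le> 1" using ln_le_minus_one[of 2] by simp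
  ultimately have "ln x \<le> 3 * x / 4 - 1" using x4 by linarith
  hence "real c * ln x \<le> real c * (3 * x / 4 - 1)" using c1 by (intro mult_left_mono) auto
  also have "real c * x = l" using c1 by (simp add: x_def)
  hence "real c * (3 * x / 4 - 1) = 3 * l / 4 - real c" by (simp add: algebra_simps)
  finally show ?thesis by (simp add: x_def)
qed

lemma pois_le1:
  fixes l :: real
  assumes "l \<ge> 0"
  shows "exp (-l) * l ^ c / fact c \<le> 1"
proof (cases "c = 0")
  case True
  have "exp (-l) \<le> exp 0" using assms by (simp only: exp_le_cancel_iff)
  thus ?thesis using True by simp
next
  case False
  hence c: "c \<ge> 1" by simp
  show ?thesis
  proof (cases "l = 0")
    case True thus ?thesis using c by (simp add: power_0_left)
  next
    case False
    hence l: "l > 0" using assms by simp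
    have "exp (-l) * l ^ c / fact c \<le> exp (real c * ln (l / real c) + real c - l) / sqrt (real c)"
      by (rule pois_aux[OF c l])
    also have "\<dots> \<le> 1 / 1"
      using pois_exponent_le0[OF c l] c by (intro frac_le) auto
    finally show ?thesis by simp
  qed
qed

lemma exp_neg_le_inv_sqrt:
  fixes l :: real
  assumes "l \<ge> 1"
  shows "exp (- l / 4) \<le> 4 / sqrt l"
proof -
  have "1 + l/4 \<le> exp (l/4)" by (rule exp_ge_add_one_self)
  moreover have "sqrt l \<le> l"
  proof -
    have "sqrt l \<le> sqrt (l * l)" using assms by (intro real_sqrt_le_mono) (simp add: mult_le_cancel_left1)
    thus ?thesis using assms by (simp add: real_sqrt_abs2)
  qed
  ultimately have "sqrt l / 4 \<le> exp (l/4)" by linarith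
  hence "1 / exp (l/4) \<le> 1 / (sqrt l / 4)" using assms by (intro divide_left_mono) auto
  thus ?thesis by (simp add: exp_minus field_simps)
qed

lemma pois_bound:
  fixes l :: real
  assumes "l \<ge> 1"
  shows "exp (-l) * l ^ c / fact c \<le> 4 / sqrt l"
proof (cases "c = 0")
  case True
  have "exp (-l) \<le> exp (-l/4)" using assms by simp
  also have "\<dots> \<le> 4 / sqrt l" by (rule exp_neg_le_inv_sqrt[OF assms])
  finally show ?thesis using True by simp
next
  case False
  hence c: "c \<ge> 1" by simp
  have l: "l > 0" using assms by simp
  have A: "exp (-l) * l ^ c / fact c \<le> exp (real c * ln (l / real c) + real c - l) / sqrt (real c)"
    by (rule pois_aux[OF c l])
  show ?thesis
  proof (cases "4 * real c \<le> l")
    case True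
    have "exp (real c * ln (l / real c) + real c - l) / sqrt (real c) \<le> exp (-l/4) / 1"
      using pois_exponent_small[OF c True] c by (intro frac_le) auto
    thus ?thesis using A exp_neg_le_inv_sqrt[OF assms] by simp
  next
    case False
    have "exp (real c * ln (l / real c) + real c - l) / sqrt (real c) \<le> 1 / sqrt (l/4)"
      using pois_exponent_le0[OF c l] False c l by (intro frac_le) auto
    also have "\<dots> = 2 / sqrt l" by (simp add: real_sqrt_divide)
    finally show ?thesis using A assms by (smt (verit) divide_right_mono real_sqrt_gt_0_iff)
  qed
qed




definition pois :: "real \<Rightarrow> nat \<Rightarrow> real" where
  "pois l c = exp (-l) * l ^ c / fact c"

lemma pois_nonneg: "l \<ge> 0 \<Longrightarrow> pois l c \<ge> 0"
  by (simp add: pois_def)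

lemma multi_bound:
  fixes W K :: "'a set" and c :: "'a \<Rightarrow> nat" and q :: "'a \<Rightarrow> real"
  assumes fin: "finite W" and qnn: "\<And>k. k \<in> W \<Longrightarrow> q k \<ge> 0" and qsum: "sum q W \<le> 1"
    and csum: "sum c W = d" and d1: "d \<ge> 1" and KW: "K \<subseteq> W"
    and th1: "th \<ge> 1" and Kq: "\<And>k. k \<in> K \<Longrightarrow> real d * q k \<ge> th"
  shows "fact d * (\<Prod>k\<in>W. q k ^ c k / fact (c k)) \<le> exp 1 * real d * (4 / sqrt th) ^ card K"
proof -
  have dpos: "real d > 0" using d1 by simp
  have e1: "(\<Prod>k\<in>W. q k ^ c k / fact (c k)) = (\<Prod>k\<in>W. (real d * q k) ^ c k / fact (c k)) / real d ^ d"
  proof -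
    have "(\<Prod>k\<in>W. (real d * q k) ^ c k / fact (c k)) = (\<Prod>k\<in>W. real d ^ c k * (q k ^ c k / fact (c k)))"
      by (simp add: power_mult_distrib)
    also have "\<dots> = (\<Prod>k\<in>W. real d ^ c k) * (\<Prod>k\<in>W. q k ^ c k / fact (c k))"
      by (rule prod.distrib)
    also have "(\<Prod>k\<in>W. real d ^ c k) = real d ^ d" using csum by (simp add: power_sum[symmetric])
    finally show ?thesis using dpos by simp
  qed
  have e2: "(\<Prod>k\<in>W. (real d * q k) ^ c k / fact (c k)) = exp (real d * sum q W) * (\<Prod>k\<in>W. pois (real d * q k) (c k))"
  proof -
    have "(\<Prod>k\<in>W. (real d * q k) ^ c k / fact (c k)) = (\<Prod>k\<in>W. exp (real d * q k) * pois (real d * q k) (c k))"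
      by (intro prod.cong refl) (simp add: pois_def exp_minus)
    also have "\<dots> = (\<Prod>k\<in>W. exp (real d * q k)) * (\<Prod>k\<in>W. pois (real d * q k) (c k))"
      by (simp add: prod.distrib)
    also have "(\<Prod>k\<in>W. exp (real d * q k)) = exp (real d * sum q W)"
      using fin by (simp add: exp_sum sum_distrib_left)
    finally show ?thesis .
  qed
  have pnn: "(\<Prod>k\<in>W. pois (real d * q k) (c k)) \<ge> 0"
    using qnn by (intro prod_nonneg pois_nonneg) auto
  have p1: "(\<Prod>k\<in>W. pois (real d * q k) (c k)) \<le> (\<Prod>k\<in>K. pois (real d * q k) (c k))"
  proof -
    have "(\<Prod>k\<in>W. pois (real d * q k) (c k)) = (\<Prod>k\<in>K. pois (real d * q k) (c k)) * (\<Prod>k\<in>W-K. pois (real d * q k) (c k))"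
      using prod.subset_diff[OF KW fin] by (simp add: mult.commute)
    also have "\<dots> \<le> (\<Prod>k\<in>K. pois (real d * q k) (c k)) * 1"
    proof (rule mult_left_mono)
      show "(\<Prod>k\<in>W-K. pois (real d * q k) (c k)) \<le> 1"
        using qnn by (intro prod_le_1) (auto simp: pois_nonneg intro!: pois_le1[folded pois_def])
      show "0 \<le> (\<Prod>k\<in>K. pois (real d * q k) (c k))"
        using qnn KW by (intro prod_nonneg pois_nonneg) auto
    qed
    finally show ?thesis by simp
  qed
  have p2: "(\<Prod>k\<in>K. pois (real d * q k) (c k)) \<le> (\<Prod>k\<in>K. 4 / sqrt th)"
  proof (rule prod_mono)
    fix k assume k: "k \<in> K"
    have "pois (real d * q k) (c k) \<le> 4 / sqrt (real d * q k)"
      unfolding pois_def using Kq[OF k] th1 by (intro pois_bound) auto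
    also have "\<dots> \<le> 4 / sqrt th" using Kq[OF k] th1 by (intro divide_left_mono) auto
    moreover have "q k \<ge> 0" using qnn k KW by auto
    ultimately show "0 \<le> pois (real d * q k) (c k) \<and> pois (real d * q k) (c k) \<le> 4 / sqrt th"
      by (simp add: pois_nonneg)
  qed
  have fd: "fact d * exp (real d) / real d ^ d \<le> exp 1 * real d"
  proof -
    have "fact d \<le> exp 1 * real d * (real d / exp 1) ^ d" by (rule stirling_upper[OF d1])
    hence "fact d * exp (real d) \<le> exp 1 * real d * ((real d / exp 1) ^ d * exp (real d))" by simp
    also have "(real d / exp 1) ^ d * exp (real d) = real d ^ d"
      by (simp add: power_divide exp_of_nat_mult[symmetric])
    finally have "fact d * exp (real d) \<le> exp 1 * real d * real d ^ d" .
    thus ?thesis using dpos by (simp add: divide_le_eq)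
  qed
  have "fact d * (\<Prod>k\<in>W. q k ^ c k / fact (c k)) =
      fact d * exp (real d * sum q W) / real d ^ d * (\<Prod>k\<in>W. pois (real d * q k) (c k))"
    unfolding e1 e2 by (simp add: times_divide_eq_right times_divide_eq_left mult.assoc)
  also have "\<dots> \<le> fact d * exp (real d) / real d ^ d * (\<Prod>k\<in>W. pois (real d * q k) (c k))"
  proof -
    have "exp (real d * sum q W) \<le> exp (real d)" using qsum dpos by (simp add: mult_left_le)
    hence "fact d * exp (real d * sum q W) / real d ^ d \<le> fact d * exp (real d) / real d ^ d"
      by (intro divide_right_mono mult_left_mono) auto
    thus ?thesis using pnn by (rule mult_right_mono)
  qed
  also have "\<dots> \<le> exp 1 * real d * (\<Prod>k\<in>K. 4 / sqrt th)"
    using fd p1 p2 pnn by (intro mult_mono) auto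
  finally show ?thesis by simp
qed




definition bq :: "nat \<Rightarrow> real \<Rightarrow> nat \<Rightarrow> real" where
  "bq N p k = real (N choose k) * p ^ k * (1 - p) ^ (N - k)"

definition bS :: "nat \<Rightarrow> real \<Rightarrow> (nat \<Rightarrow> real) \<Rightarrow> real" where
  "bS N p f = (\<Sum>k\<le>N. bq N p k * f k)"

lemma S_Suc: "bS (Suc N) p f = (1 - p) * bS N p f + p * bS N p (\<lambda>k. f (Suc k))"
proof -
  define T where "T = (\<Sum>k\<le>Suc N. real (N choose k) * p ^ k * (1 - p) ^ (Suc N - k) * f k)"
  have i: "T = (1 - p) * bS N p f"
  proof -
    have "T = (\<Sum>k\<le>N. real (N choose k) * p ^ k * (1 - p) ^ (Suc N - k) * f k)"
      unfolding T_def by (simp add: sum.atMost_Suc)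
    also have "\<dots> = (\<Sum>k\<le>N. (1 - p) * (bq N p k * f k))"
      by (intro sum.cong refl) (auto simp: bq_def Suc_diff_le)
    finally show ?thesis by (simp add: bS_def sum_distrib_left)
  qed
  have ii: "T = (1 - p) ^ Suc N * f 0 + (\<Sum>k\<le>N. real (N choose Suc k) * p ^ Suc k * (1 - p) ^ (N - k) * f (Suc k))"
    unfolding T_def by (subst sum.atMost_Suc_shift) simp
  have iii: "bS (Suc N) p f = (1 - p) ^ Suc N * f 0 +
      (\<Sum>k\<le>N. (real (N choose k) + real (N choose Suc k)) * p ^ Suc k * (1 - p) ^ (N - k) * f (Suc k))"
    unfolding bS_def bq_def by (subst sum.atMost_Suc_shift) simp
  have iv: "(\<Sum>k\<le>N. (real (N choose k) + real (N choose Suc k)) * p ^ Suc k * (1 - p) ^ (N - k) * f (Suc k))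
     = p * bS N p (\<lambda>k. f (Suc k)) + (\<Sum>k\<le>N. real (N choose Suc k) * p ^ Suc k * (1 - p) ^ (N - k) * f (Suc k))"
    unfolding bS_def bq_def by (simp add: sum_distrib_left sum.distrib[symmetric] algebra_simps)
  show ?thesis using i ii iii iv by simp
qed

lemma S_add: "bS N p (\<lambda>k. f k + g k) = bS N p f + bS N p g"
  by (simp add: bS_def algebra_simps sum.distrib)
lemma S_mult: "bS N p (\<lambda>k. a * f k) = a * bS N p f"
  by (simp add: bS_def algebra_simps sum_distrib_left)
lemma S_const: "bS N p (\<lambda>k. a) = a"
proof -
  have "bS N p (\<lambda>k. 1) = 1"
    unfolding bS_def bq_def using binomial_ring[of p "1 - p" N] by (simp add: atLeast0AtMost)
  thus ?thesis using S_mult[of N p a "\<lambda>k. 1"] by simp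
qed

lemma S_id: "bS N p (\<lambda>k. real k) = real N * p"
proof (induction N)
  case 0 thus ?case by (simp add: bS_def)
next
  case (Suc N)
  have "bS (Suc N) p (\<lambda>k. real k) = (1 - p) * bS N p (\<lambda>k. real k) + p * bS N p (\<lambda>k. 1 + real k)"
    using S_Suc[of N p "\<lambda>k. real k"] by simp
  also have "bS N p (\<lambda>k. 1 + real k) = 1 + real N * p" using Suc by (simp add: S_add S_const)
  finally show ?case using Suc by (simp add: algebra_simps)
qed

lemma S_sq: "bS N p (\<lambda>k. real k ^ 2) = real N * p * (1 - p) + (real N * p) ^ 2"
proof (induction N)
  case 0 thus ?case by (simp add: bS_def)
next
  case (Suc N)
  have "bS (Suc N) p (\<lambda>k. real k ^ 2) = (1 - p) * bS N p (\<lambda>k. real k ^ 2) + p * bS N p (\<lambda>k. (1 + real k) ^ 2)"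
    using S_Suc[of N p "\<lambda>k. real k ^ 2"] by simp
  also have "bS N p (\<lambda>k. (1 + real k) ^ 2) = bS N p (\<lambda>k. real k ^ 2) + 2 * (real N * p) + 1"
  proof -
    have "bS N p (\<lambda>k. (1 + real k) ^ 2) = bS N p (\<lambda>k. real k ^ 2 + (2 * real k + 1))"
      by (simp add: power2_eq_square algebra_simps)
    thus ?thesis by (simp add: S_add S_mult S_const S_id)
  qed
  finally show ?case using Suc by (simp add: algebra_simps power2_eq_square)
qed

lemma S_var: "bS N p (\<lambda>k. (real k - real N * p) ^ 2) = real N * p * (1 - p)"
proof -
  have "bS N p (\<lambda>k. (real k - real N * p) ^ 2) =
        bS N p (\<lambda>k. real k ^ 2 + (-2 * (real N * p)) * real k + (real N * p) ^ 2)"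
    by (simp add: power2_eq_square algebra_simps)
  also have "\<dots> = bS N p (\<lambda>k. real k ^ 2) + (-2 * (real N * p)) * bS N p (\<lambda>k. real k) + (real N * p) ^ 2"
    by (simp only: S_add S_mult S_const)
  also have "\<dots> = real N * p * (1 - p)" unfolding S_sq S_id by (simp add: algebra_simps power2_eq_square)
  finally show ?thesis .
qed

lemma bq_nonneg: "0 \<le> p \<Longrightarrow> p \<le> 1 \<Longrightarrow> bq N p k \<ge> 0"
  by (simp add: bq_def)

lemma window_mass:
  assumes p: "0 \<le> p" "p \<le> 1" and t: "t > 0"
  shows "(\<Sum>k\<in>{k. k \<le> N \<and> \<bar>real k - real N * p\<bar> \<le> t}. bq N p k) \<ge> 1 - real N * p / t ^ 2"
proof -
  let ?mu = "real N * p"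
  let ?A = "{k. k \<le> N \<and> \<bar>real k - ?mu\<bar> \<le> t}"
  let ?B = "{k. k \<le> N \<and> \<not> \<bar>real k - ?mu\<bar> \<le> t}"
  have fin: "finite ?A" "finite ?B" by auto
  have split: "(\<Sum>k\<le>N. bq N p k) = sum (bq N p) ?A + sum (bq N p) ?B"
  proof -
    have eq: "{..N} = ?A \<union> ?B" by auto
    show ?thesis by (subst eq) (rule sum.union_disjoint; auto)
  qed
  have tot: "(\<Sum>k\<le>N. bq N p k) = 1" using S_const[of N p 1] by (simp add: bS_def)
  have "sum (bq N p) ?B \<le> (\<Sum>k\<in>?B. bq N p k * ((real k - ?mu) ^ 2 / t ^ 2))"
  proof (rule sum_mono)
    fix k assume k: "k \<in> ?B"
    hence "t \<le> \<bar>real k - ?mu\<bar>" by auto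
    hence "t ^ 2 \<le> \<bar>real k - ?mu\<bar> ^ 2" using t by (intro power_mono) auto
    hence "t ^ 2 \<le> (real k - ?mu) ^ 2" by simp
    hence "1 \<le> (real k - ?mu) ^ 2 / t ^ 2" using t by simp
    thus "bq N p k \<le> bq N p k * ((real k - ?mu) ^ 2 / t ^ 2)"
      using bq_nonneg[OF p, of N k] mult_left_mono[of 1 "(real k - ?mu) ^ 2 / t ^ 2" "bq N p k"] by simp
  qed
  also have "\<dots> \<le> (\<Sum>k\<le>N. bq N p k * ((real k - ?mu) ^ 2 / t ^ 2))"
    using bq_nonneg[OF p] by (intro sum_mono2) auto
  also have "\<dots> = bS N p (\<lambda>k. (real k - ?mu) ^ 2) / t ^ 2"
    by (simp add: bS_def sum_divide_distrib)
  also have "\<dots> = ?mu * (1 - p) / t ^ 2" by (simp add: S_var)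
  also have "\<dots> \<le> ?mu / t ^ 2" using p t by (intro divide_right_mono) (auto simp: mult_left_le)
  finally show ?thesis using split tot by linarith
qed




lemma card_interval_real:
  fixes x w :: real assumes w: "w \<ge> 0" and AS: "A \<subseteq> {k::nat. x \<le> real k \<and> real k \<le> x + w}"
  shows "real (card A) \<le> w + 1"
proof -
  define a where "a = nat \<lceil>x\<rceil>"
  define m where "m = nat \<lfloor>w\<rfloor> + 1"
  have sub: "{k::nat. x \<le> real k \<and> real k \<le> x + w} \<subseteq> {a..<a+m}"
  proof
    fix k assume "k \<in> {k::nat. x \<le> real k \<and> real k \<le> x + w}"
    hence k: "x \<le> real k" "real k \<le> x + w" by auto
    have "\<lceil>x\<rceil> \<le> int k" using k(1) by (intro ceiling_le) simp
    hence ak: "a \<le> k" unfolding a_def using k(1) by simp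
    have "x \<le> real a"
    proof (cases "x \<le> 0")
      case True thus ?thesis by simp
    next
      case False
      hence "\<lceil>x\<rceil> \<ge> 0" by linarith
      hence "real a = of_int \<lceil>x\<rceil>" unfolding a_def by simp
      thus ?thesis by simp
    qed
    moreover have "w < real (nat \<lfloor>w\<rfloor>) + 1"
    proof -
      have "\<lfloor>w\<rfloor> \<ge> 0" using w by simp
      hence "real (nat \<lfloor>w\<rfloor>) = of_int \<lfloor>w\<rfloor>" by simp
      thus ?thesis by linarith
    qed
    ultimately have "real k < real (a + m)" using k(2) by (simp add: m_def)
    hence "k < a + m" by linarith
    thus "k \<in> {a..<a+m}" using ak by simp
  qed
  have "card A \<le> card {a..<a+m}"
    by (rule card_mono[OF _ order_trans[OF AS sub]]) simp
  hence "real (card A) \<le> real m" by simp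
  also have "real m \<le> w + 1" using w by (simp add: m_def)
  finally show ?thesis .
qed

lemma pigeon:
  fixes f :: "'a \<Rightarrow> real"
  assumes "finite A" "sum f A \<ge> s" "s > 0"
  shows "\<exists>k\<in>A. f k \<ge> s / real (card A)"
proof (rule ccontr)
  assume "\<not> ?thesis"
  hence lt: "\<And>k. k \<in> A \<Longrightarrow> f k < s / real (card A)" by auto
  show False
  proof (cases "A = {}")
    case True thus False using assms by simp
  next
    case False
    hence "sum f A < sum (\<lambda>_. s / real (card A)) A" using assms(1) lt by (intro sum_strict_mono) auto
    also have "\<dots> = s" using False assms(1) by simp
    finally show False using assms by simp
  qed
qed

lemma bq_step:
  assumes "i < N"
  shows "bq N p (Suc i) * (real (Suc i) * (1 - p)) = bq N p i * (real (N - i) * p)"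
proof -
  have c: "real (Suc i) * real (N choose Suc i) = real (N - i) * real (N choose i)"
  proof -
    have "Suc i * (N choose Suc i) = N * ((N - 1) choose i)" by (rule binomial_absorption)
    also have "\<dots> = (N - i) * (N choose i)" by (rule binomial_absorb_comp[symmetric])
    finally show ?thesis by (metis of_nat_mult)
  qed
  have pw: "(1 - p) ^ (N - i) = (1 - p) ^ (N - Suc i) * (1 - p)"
    using assms by (metis Suc_diff_Suc power_Suc2)
  have "bq N p (Suc i) * (real (Suc i) * (1 - p)) =
     (real (Suc i) * real (N choose Suc i)) * (p ^ Suc i * ((1 - p) ^ (N - Suc i) * (1 - p)))"
    unfolding bq_def by (simp only: mult_ac)
  also have "\<dots> = (real (N - i) * real (N choose i)) * (p ^ Suc i * ((1 - p) ^ (N - Suc i) * (1 - p)))"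
    unfolding c ..
  also have "\<dots> = bq N p i * (real (N - i) * p)"
    unfolding bq_def pw by (simp only: mult_ac power_Suc)
  finally show ?thesis .
qed

lemma bq_ratio:
  assumes p: "0 < p" "p \<le> 1/2" and iN: "i < N" and a: "a \<ge> 0"
    and imu: "real i \<le> real N * p + a" and del: "2 * (a + 1) \<le> real N * p"
  shows "bq N p (Suc i) \<ge> (1 - 2 * (a + 1) / (real N * p)) * bq N p i"
proof -
  define mu where "mu = real N * p"
  define dl where "dl = 2 * (a + 1) / mu"
  have mupos: "mu > 0" using del a unfolding mu_def by (smt (verit))
  have dl1: "dl \<le> 1" "dl \<ge> 0" using del mupos a unfolding dl_def mu_def[symmetric] by (auto simp: field_simps)
  have bqnn: "bq N p i \<ge> 0" using p by (intro bq_nonneg) auto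
  have key: "(1 - dl) * (real (Suc i) * (1 - p)) \<le> real (N - i) * p"
  proof -
    have "(1 - dl) * (real (Suc i) * (1 - p)) \<le> (1 - dl) * ((mu + a + 1) * (1 - p))"
      using dl1 p imu unfolding mu_def by (intro mult_left_mono mult_right_mono) auto
    also have "\<dots> = (1 - p) * (mu - (a + 1) - dl * (a + 1))"
      using mupos unfolding dl_def by (simp add: field_simps)
    also have "\<dots> \<le> (1 - p) * (mu - a - 1)"
      using p dl1 a by (intro mult_left_mono) auto
    also have "\<dots> \<le> mu * (1 - p) - a * p"
    proof -
      have "a * p \<le> a * (1/2)" using p a by (intro mult_left_mono) auto
      thus ?thesis using p by (simp add: algebra_simps)
    qed
    also have "mu * (1 - p) - a * p = (real N - mu - a) * p" unfolding mu_def by (simp add: algebra_simps)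
    also have "\<dots> \<le> real (N - i) * p"
      using iN imu p unfolding mu_def by (intro mult_right_mono) auto
    finally show ?thesis .
  qed
  have "(1 - dl) * bq N p i * (real (Suc i) * (1 - p)) \<le> bq N p i * (real (N - i) * p)"
    using mult_left_mono[OF key bqnn] by (simp add: algebra_simps)
  also have "\<dots> = bq N p (Suc i) * (real (Suc i) * (1 - p))" using bq_step[OF iN] by simp
  finally have "(1 - dl) * bq N p i * (real (Suc i) * (1 - p)) \<le> bq N p (Suc i) * (real (Suc i) * (1 - p))" .
  moreover have "real (Suc i) * (1 - p) > 0" using p by simp
  ultimately have "(1 - dl) * bq N p i \<le> bq N p (Suc i)"
    using mult_le_cancel_right_pos[of "real (Suc i) * (1 - p)" "(1 - dl) * bq N p i" "bq N p (Suc i)"]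
    by (simp only: mult.assoc)
  thus ?thesis unfolding dl_def mu_def by simp
qed

lemma bq_chain:
  assumes p: "0 < p" "p \<le> 1/2" and a: "a \<ge> 0" and del: "2 * (a + 1) \<le> real N * p"
    and LN: "k0 + L \<le> N" and Lmu: "real (k0 + L) \<le> real N * p + a" and jL: "j \<le> L"
  shows "bq N p (k0 + j) \<ge> (1 - 2 * (a + 1) / (real N * p)) ^ j * bq N p k0"
  using jL
proof (induction j)
  case 0 thus ?case by simp
next
  case (Suc j)
  define dl where "dl = 2 * (a + 1) / (real N * p)"
  have dl1: "1 - dl \<ge> 0" using del a p unfolding dl_def by (auto simp: field_simps)
  have "(1 - dl) ^ Suc j * bq N p k0 = (1 - dl) * ((1 - dl) ^ j * bq N p k0)" by simp
  also have "\<dots> \<le> (1 - dl) * bq N p (k0 + j)"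
    using Suc dl1 unfolding dl_def by (intro mult_left_mono) auto
  also have "\<dots> \<le> bq N p (Suc (k0 + j))"
    unfolding dl_def
    by (rule bq_ratio[OF p _ a _ del]) (use Suc.prems LN Lmu in auto)
  finally show ?case unfolding dl_def by simp
qed




lemma binom_cells:
  assumes p: "0 < p" "p \<le> 1/2" and mu: "real N * p \<ge> 1024"
  shows "\<exists>K. finite K \<and> real (card K) \<ge> sqrt (real N * p) / 16 \<and>
             (\<forall>k\<in>K. bq N p k \<ge> 1 / (14 * sqrt (real N * p)))"
proof -
  define m where "m = real N * p"
  define s where "s = sqrt m"
  have m0: "m \<ge> 1024" using mu by (simp add: m_def)
  have sm: "s * s = m" "s ^ 2 = m" using m0 by (auto simp: s_def)
  have s32: "s \<ge> 32"
  proof -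
    have "sqrt 1024 \<le> s" unfolding s_def using m0 by (rule real_sqrt_le_mono)
    moreover have "sqrt (1024::real) = 32" by (simp add: real_sqrt_eq_iff[symmetric] power2_eq_square)
    ultimately show ?thesis by simp
  qed
  have mN: "2 * m \<le> real N"
  proof -
    have "real N * (2 * p) \<le> real N * 1" using p by (intro mult_left_mono) auto
    thus ?thesis unfolding m_def by simp
  qed
  define W where "W = {k. k \<le> N \<and> \<bar>real k - m\<bar> \<le> 2 * s}"
  have finW: "finite W" unfolding W_def by auto
  have massW: "sum (bq N p) W \<ge> 3/4"
  proof -
    have "sum (bq N p) W \<ge> 1 - m / (2 * s) ^ 2"
      using window_mass[of p "2 * s" N] p s32 unfolding W_def m_def by auto
    moreover have "m / (2 * s) ^ 2 = 1/4" using sm m0 by (simp add: power_mult_distrib)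
    ultimately show ?thesis by linarith
  qed
  have cardW: "real (card W) \<le> 5 * s"
  proof -
    have "W \<subseteq> {k. m - 2 * s \<le> real k \<and> real k \<le> m - 2 * s + 4 * s}" unfolding W_def by auto
    hence "real (card W) \<le> 4 * s + 1"
      using card_interval_real[of "4 * s" W "m - 2 * s"] s32 by auto
    thus ?thesis using s32 by simp
  qed
  obtain k0 where k0W: "k0 \<in> W" and k0b: "bq N p k0 \<ge> (3/4) / real (card W)"
    using pigeon[OF finW massW] by auto
  have cW0: "real (card W) > 0" using k0W finW card_gt_0_iff by fastforce
  have bk0: "bq N p k0 \<ge> 3 / (20 * s)"
  proof -
    have "(3/4) / (5 * s) \<le> (3/4) / real (card W)"
      using cW0 cardW by (intro divide_left_mono) auto
    thus ?thesis using k0b by simp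
  qed
  have k0m: "real k0 \<le> m + 2 * s" using k0W unfolding W_def by auto
  define L where "L = nat \<lfloor>s / 16\<rfloor>"
  have L1: "real L \<le> s / 16" "real L + 1 \<ge> s / 16"
  proof -
    have "\<lfloor>s / 16\<rfloor> \<ge> 0" using s32 by simp
    hence "real L = of_int \<lfloor>s / 16\<rfloor>" unfolding L_def by simp
    thus "real L \<le> s / 16" "real L + 1 \<ge> s / 16" by linarith+
  qed
  define K where "K = {k0..k0 + L}"
  have cardK: "real (card K) \<ge> s / 16" using L1 unfolding K_def by simp
  define a where "a = 3 * s"
  have a0: "a \<ge> 0" using s32 by (simp add: a_def)
  have del: "2 * (a + 1) \<le> real N * p"
  proof -
    have "32 * s \<le> s * s" using s32 by (intro mult_right_mono) auto
    hence "6 * s + 2 \<le> s * s" using s32 by linarith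
    thus ?thesis using sm unfolding a_def m_def by simp
  qed
  have kL: "real (k0 + L) \<le> real N * p + a" using k0m L1 s32 unfolding a_def m_def by simp
  have LN: "k0 + L \<le> N"
  proof -
    have "32 * s \<le> s * s" using s32 by (intro mult_right_mono) auto
    hence "3 * s \<le> s * s" using s32 by linarith
    hence "real (k0 + L) \<le> 2 * m" using kL sm unfolding a_def m_def by simp
    thus ?thesis using mN by linarith
  qed
  have "\<forall>k\<in>K. bq N p k \<ge> 1 / (14 * s)"
  proof
    fix k assume "k \<in> K"
    then obtain j where j: "j \<le> L" "k = k0 + j" unfolding K_def
      by (metis atLeastAtMost_iff le_add_diff_inverse nat_add_left_cancel_le)
    define dl where "dl = 2 * (a + 1) / (real N * p)"
    have dl0: "dl \<ge> 0" "dl \<le> 1" using del a0 p unfolding dl_def by (auto simp: field_simps)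
    have ch: "bq N p k \<ge> (1 - dl) ^ j * bq N p k0"
      unfolding j(2) dl_def by (rule bq_chain[OF p a0 del LN kL j(1)])
    have jd: "real j * dl \<le> 1/2"
    proof -
      have "real j * dl \<le> (s / 16) * dl" using j L1 dl0 by (intro mult_right_mono) auto
      also have "\<dots> = (6 * s + 2) / (16 * s)"
        using s32 unfolding dl_def a_def m_def[symmetric] sm(1)[symmetric] by (simp add: field_simps power2_eq_square)
      also have "\<dots> \<le> 1/2" using s32 by (simp add: field_simps)
      finally show ?thesis .
    qed
    have "(1 - dl) ^ j \<ge> 1 - real j * dl"
      using Bernoulli_inequality[of "- dl" j] dl0 by simp
    hence "(1 - dl) ^ j \<ge> 1/2" using jd by simp
    hence "(1 - dl) ^ j * bq N p k0 \<ge> 1/2 * (3 / (20 * s))"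
      using bk0 s32 by (intro mult_mono) auto
    moreover have "1/2 * (3 / (20 * s)) \<ge> 1 / (14 * s)" using s32 by (simp add: field_simps)
    ultimately show "bq N p k \<ge> 1 / (14 * s)" using ch by linarith
  qed
  thus ?thesis using cardK unfolding K_def s_def m_def by (intro exI[of _ "{k0..k0+L}"]) auto
qed




lemma point_bound:
  fixes Q :: "nat pmf" and d :: nat
  defines "X \<equiv> Pi_pmf {..<d} 0 (\<lambda>_. Q)"
  shows "measure_pmf.prob X {a. image_mset a (mset_set {..<d}) = M}
     \<le> real (card (permutations_of_multiset M)) * (\<Prod>k\<in>set_mset M. pmf Q k ^ count M k)"
proof -
  let ?F = "\<lambda>a::nat\<Rightarrow>nat. image_mset a (mset_set {..<d})"
  define T where "T = {a. ?F a = M} \<inter> set_pmf X"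
  let ?g = "\<lambda>a::nat\<Rightarrow>nat. map a [0..<d]"
  have Text: "\<And>a. a \<in> T \<Longrightarrow> (\<forall>x. x \<notin> {..<d} \<longrightarrow> a x = 0)"
    using set_Pi_pmf_subset[of "{..<d}" 0 "\<lambda>_. Q"] unfolding T_def X_def by auto
  have inj: "inj_on ?g T"
  proof (rule inj_onI)
    fix a b assume ab: "a \<in> T" "b \<in> T" "?g a = ?g b"
    show "a = b"
    proof
      fix x show "a x = b x"
      proof (cases "x < d")
        case True
        have "\<forall>x\<in>{0..<d}. a x = b x" using ab(3) by simp
        thus ?thesis using True by simp
      next
        case False thus ?thesis using Text[OF ab(1)] Text[OF ab(2)] by auto
      qed
    qed
  qed
  have gmset: "\<And>a. mset (?g a) = ?F a"
    by (simp add: mset_map atLeast_upt)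
  have img: "?g ` T \<subseteq> permutations_of_multiset M"
    using gmset unfolding T_def by (auto intro!: permutations_of_multisetI)
  have finT: "finite T"
    using finite_subset[OF img finite_permutations_of_multiset] inj by (rule finite_imageD)
  have cardT: "card T \<le> card (permutations_of_multiset M)"
    using card_inj_on_le[OF inj img finite_permutations_of_multiset] .
  have pmfX: "\<And>a. a \<in> T \<Longrightarrow> pmf X a = (\<Prod>k\<in>set_mset M. pmf Q k ^ count M k)"
  proof -
    fix a assume a: "a \<in> T"
    have "pmf X a = (\<Prod>x\<in>{..<d}. pmf Q (a x))"
      unfolding X_def using Text[OF a] by (simp add: pmf_Pi)
    also have "\<dots> = prod_mset (image_mset (pmf Q) (?F a))"
      by (simp add: prod_unfold_prod_mset image_mset.compositionality comp_def)
    also have "?F a = M" using a unfolding T_def by simp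
    finally show "pmf X a = (\<Prod>k\<in>set_mset M. pmf Q k ^ count M k)"
      by (simp add: image_prod_mset_multiplicity)
  qed
  have "measure_pmf.prob X {a. ?F a = M} = measure_pmf.prob X T"
    unfolding T_def by (rule measure_Int_set_pmf[symmetric])
  also have "\<dots> = sum (pmf X) T" using finT by (rule measure_measure_pmf_finite)
  also have "\<dots> = real (card T) * (\<Prod>k\<in>set_mset M. pmf Q k ^ count M k)"
    using pmfX by simp
  also have "\<dots> \<le> real (card (permutations_of_multiset M)) * (\<Prod>k\<in>set_mset M. pmf Q k ^ count M k)"
    using cardT by (intro mult_right_mono prod_nonneg) auto
  finally show ?thesis .
qed

lemma point_bound_zero:
  fixes Q :: "nat pmf"
  assumes "size M \<noteq> d"
  shows "measure_pmf.prob (Pi_pmf {..<d} 0 (\<lambda>_. Q)) {a. image_mset a (mset_set {..<d}) = M} = 0"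
proof -
  have "{a::nat\<Rightarrow>nat. image_mset a (mset_set {..<d}) = M} = {}" using assms by auto
  thus ?thesis by simp
qed

lemma card_perm_real:
  "real (card (permutations_of_multiset M)) = fact (size M) / (\<Prod>x\<in>set_mset M. fact (count M x))"
proof -
  have "real (card (permutations_of_multiset M)) * (\<Prod>x\<in>set_mset M. fact (count M x)) = fact (size M)"
    using arg_cong[OF card_permutations_of_multiset_aux[of M], of real] by simp
  moreover have "(\<Prod>x\<in>set_mset M. fact (count M x) :: real) > 0" by (intro prod_pos) auto
  ultimately show ?thesis by (simp add: field_simps)
qed




lemma pair_bound:
  fixes X :: "'a pmf" and F :: "'a \<Rightarrow> 'b"
  assumes B: "\<And>m. measure_pmf.prob X {b. F b = m} \<le> \<beta>"
  shows "measure_pmf.prob (pair_pmf X X) {(a,b). F a = F b} \<le> \<beta>"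
proof -
  let ?S = "{(a,b). F a = F b}"
  have b0: "\<beta> \<ge> 0" using B[of undefined] measure_nonneg[of X] by (meson order_trans)
  have "emeasure (pair_pmf X X) ?S = (\<integral>\<^sup>+x. indicator ?S x \<partial>pair_pmf X X)"
    by simp
  also have "\<dots> = (\<integral>\<^sup>+a. \<integral>\<^sup>+b. indicator ?S (a, b) \<partial>X \<partial>X)"
    by (rule nn_integral_pair_pmf')
  also have "\<dots> = (\<integral>\<^sup>+a. emeasure X {b. F b = F a} \<partial>X)"
  proof (intro nn_integral_cong)
    fix a
    have "(\<lambda>b. indicator ?S (a, b) :: ennreal) = indicator {b. F b = F a}"
      by (auto simp: indicator_def fun_eq_iff)
    thus "(\<integral>\<^sup>+b. indicator ?S (a, b) \<partial>X) = emeasure X {b. F b = F a}" by simp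
  qed
  also have "\<dots> \<le> (\<integral>\<^sup>+a. ennreal \<beta> \<partial>X)"
  proof (intro nn_integral_mono)
    fix a
    show "emeasure X {b. F b = F a} \<le> ennreal \<beta>"
      using B[of "F a"] by (simp add: measure_pmf.emeasure_eq_measure ennreal_leI)
  qed
  also have "\<dots> = ennreal \<beta>" by simp
  finally have "ennreal (measure_pmf.prob (pair_pmf X X) ?S) \<le> ennreal \<beta>"
    by (simp add: measure_pmf.emeasure_eq_measure)
  thus ?thesis using b0 by simp
qed




lemma sum_pmf_le_1: "finite A \<Longrightarrow> sum (pmf Q) A \<le> 1"
  using measure_measure_pmf_finite[of A Q] measure_pmf.prob_le_1[of Q A] by simp

lemma main_bound:
  assumes p: "0 < p" "p \<le> 1/2" and mu: "real N * p \<ge> 1024" and d1: "d \<ge> 1"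
    and th: "real d / (14 * sqrt (real N * p)) \<ge> 16"
  shows "multiset_eq_prob d N p \<le>
     exp 1 * real d * (4 / sqrt (real d / (14 * sqrt (real N * p)))) powr (sqrt (real N * p) / 16)"
proof -
  define th where "th = real d / (14 * sqrt (real N * p))"
  define Q where "Q = binomial_pmf N p"
  define r where "r = 4 / sqrt th"
  have r: "r > 0" "r \<le> 1" using th unfolding th_def[symmetric] r_def
    by (auto simp: real_le_rsqrt)
  obtain K where K: "finite K" "real (card K) \<ge> sqrt (real N * p) / 16"
      "\<And>k. k \<in> K \<Longrightarrow> bq N p k \<ge> 1 / (14 * sqrt (real N * p))"
    using binom_cells[OF p mu] by blast
  have pmfQ: "\<And>k. pmf Q k = bq N p k" unfolding Q_def bq_def using p by simp
  have bnd: "exp 1 * real d * r ^ card K \<le> exp 1 * real d * r powr (sqrt (real N * p) / 16)"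
  proof -
    have "r ^ card K = r powr real (card K)" using r by (simp add: powr_realpow)
    also have "\<dots> \<le> r powr (sqrt (real N * p) / 16)" using r K(2) by (intro powr_mono') auto
    finally show ?thesis by (intro mult_left_mono) auto
  qed
  have "multiset_eq_prob d N p \<le> exp 1 * real d * r ^ card K"
    unfolding multiset_eq_prob_def
  proof (rule pair_bound)
    fix M :: "nat multiset"
    show "measure_pmf.prob (bin_vec d N p) {b. image_mset b (mset_set {..<d}) = M} \<le> exp 1 * real d * r ^ card K"
    proof (cases "size M = d")
      case False
      thus ?thesis unfolding bin_vec_def using point_bound_zero[OF False] r by simp
    next
      case True
      define W where "W = set_mset M \<union> K"
      have finW: "finite W" using K(1) by (simp add: W_def)
      have "measure_pmf.prob (bin_vec d N p) {b. image_mset b (mset_set {..<d}) = M}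
          \<le> real (card (permutations_of_multiset M)) * (\<Prod>k\<in>set_mset M. pmf Q k ^ count M k)"
        unfolding bin_vec_def Q_def by (rule point_bound)
      also have "\<dots> = fact d * (\<Prod>k\<in>set_mset M. pmf Q k ^ count M k / fact (count M k))"
        unfolding card_perm_real True by (simp add: prod_dividef)
      also have "(\<Prod>k\<in>set_mset M. pmf Q k ^ count M k / fact (count M k)) =
                 (\<Prod>k\<in>W. pmf Q k ^ count M k / fact (count M k))"
        using finW unfolding W_def by (intro prod.mono_neutral_left) (auto simp: not_in_iff)
      also have "fact d * \<dots> \<le> exp 1 * real d * (4 / sqrt th) ^ card K"
      proof (rule multi_bound[OF finW])
        show "sum (pmf Q) W \<le> 1" using finW by (rule sum_pmf_le_1)
        show "sum (count M) W = d"
        proof -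
          have "sum (count M) W = sum (count M) (set_mset M)"
            using finW unfolding W_def by (intro sum.mono_neutral_right) (auto simp: not_in_iff)
          thus ?thesis using True by (simp add: size_multiset_overloaded_eq)
        qed
        show "K \<subseteq> W" by (simp add: W_def)
        show "th \<ge> 1" using th unfolding th_def by simp
        fix k assume k: "k \<in> K"
        have "real d * (1 / (14 * sqrt (real N * p))) \<le> real d * pmf Q k"
          using K(3)[OF k] pmfQ by (intro mult_left_mono) auto
        thus "real d * pmf Q k \<ge> th" unfolding th_def by simp
      qed (use d1 in auto)
      finally show ?thesis unfolding r_def .
    qed
  qed
  also note bnd
  finally show ?thesis unfolding r_def th_def .
qed




definition Gf :: "real \<Rightarrow> real" where
  "Gf s = 1 + ln 224 + ln s / 2 + (sqrt s / 23 - 2) * (ln 4 + ln 28 / 2 - ln s / 4)"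

lemma Gf_event: "eventually (\<lambda>s::real. Gf s \<le> - (1/200) * sqrt s * ln s) at_top"
  unfolding Gf_def by real_asymp

lemma final_n:
  fixes p s :: real and n N d :: nat
  assumes p: "0 \<le> p" "p \<le> 1/2" and n4: "n \<ge> 4"
    and Nr: "real n - sqrt (real n) \<le> real N" "N \<le> n"
    and s_def: "s = real n * p" and ds: "real d \<ge> s / 2"
    and sbig: "s \<ge> 250000" and G: "Gf s \<le> - (1/200) * sqrt s * ln s"
  shows "multiset_eq_prob d N p \<le> exp (- (1/200) * sqrt s * ln s)"
proof -
  define mu where "mu = real N * p"
  have ppos: "p > 0" using sbig s_def p by (cases "p = 0") auto
  have sqn: "sqrt (real n) \<le> real n / 2"
  proof -
    have "2 \<le> sqrt (real n)" using n4 by (simp add: real_le_rsqrt)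
    hence "2 * sqrt (real n) \<le> sqrt (real n) * sqrt (real n)" by (intro mult_right_mono) auto
    thus ?thesis by simp
  qed
  have Nn: "real N \<ge> real n / 2" using Nr sqn by linarith
  have mu_le: "mu \<le> s" unfolding mu_def s_def using Nr ppos by (intro mult_right_mono) auto
  have mu_ge: "mu \<ge> s / 2" unfolding mu_def s_def using Nn ppos mult_right_mono[OF Nn, of p] by simp
  have mu1024: "mu \<ge> 1024" using mu_ge sbig by simp
  have d1: "d \<ge> 1" using ds sbig by (cases d) auto
  define rs where "rs = sqrt s"
  have rs500: "rs \<ge> 500"
  proof -
    have "sqrt 250000 \<le> rs" unfolding rs_def using sbig by (rule real_sqrt_le_mono)
    moreover have "sqrt (250000::real) = 500" by (simp add: real_sqrt_eq_iff[symmetric] power2_eq_square)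
    ultimately show ?thesis by simp
  qed
  have rss: "rs * rs = s" using sbig by (simp add: rs_def)
  define th where "th = real d / (14 * sqrt mu)"
  have smu: "sqrt mu \<le> rs" unfolding rs_def using mu_le by (rule real_sqrt_le_mono)
  have smu0: "sqrt mu > 0" using mu1024 by simp
  have th_ge: "th \<ge> rs / 28"
  proof -
    have "rs / 28 = (s / 2) / (14 * rs)" using rs500 rss by (simp add: field_simps)
    also have "\<dots> \<le> real d / (14 * rs)" using ds rs500 by (intro divide_right_mono) auto
    also have "\<dots> \<le> real d / (14 * sqrt mu)" using smu smu0 rs500 by (intro divide_left_mono) auto
    finally show ?thesis unfolding th_def .
  qed
  have th16: "th \<ge> 16" using th_ge rs500 by simp
  define r where "r = 4 / sqrt th"
  define r0 where "r0 = 4 / sqrt (rs / 28)"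
  have rpos: "r > 0" using th16 by (simp add: r_def)
  have rr0: "r \<le> r0" unfolding r_def r0_def using th_ge rs500
    by (intro divide_left_mono real_sqrt_le_mono mult_pos_pos) auto
  have r01: "r0 \<le> 1"
  proof -
    have "4 \<le> sqrt (rs / 28)" using rs500 by (simp add: real_le_rsqrt)
    thus ?thesis unfolding r0_def using rs500 by (simp add: divide_le_eq)
  qed
  have r0pos: "r0 > 0" using rs500 by (simp add: r0_def)
  define a where "a = sqrt mu / 16"
  have a_ge: "a \<ge> rs / 23"
  proof -
    have "sqrt (s / 2) \<le> sqrt mu" using mu_ge by (rule real_sqrt_le_mono)
    moreover have "sqrt (s / 2) = rs / sqrt 2" unfolding rs_def by (simp add: real_sqrt_divide)
    moreover have "sqrt (2::real) \<le> 23 / 16"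
    proof -
      have "sqrt (2::real) \<le> sqrt ((23/16)^2)" by (intro real_sqrt_le_mono) (simp add: power2_eq_square)
      thus ?thesis by simp
    qed
    moreover have "rs / (23 / 16) \<le> rs / sqrt 2"
      using calculation(3) rs500 by (intro divide_left_mono) auto
    ultimately have "rs / (23/16) \<le> sqrt mu" by linarith
    thus ?thesis unfolding a_def by simp
  qed
  have "multiset_eq_prob d N p \<le> exp 1 * real d * r powr a"
    using main_bound[OF ppos p(2) _ d1] mu1024 th16 unfolding r_def a_def th_def mu_def by simp
  also have "exp 1 * real d * r powr a = exp 1 * (real d * r ^ 2) * r powr (a - 2)"
  proof -
    have "r powr a = r powr (2 + (a - 2))" by simp
    also have "\<dots> = r powr 2 * r powr (a - 2)" by (rule powr_add)
    also have "r powr 2 = r ^ 2" using rpos powr_realpow[of r 2] by simp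
    finally show ?thesis by simp
  qed
  also have "real d * r ^ 2 = 224 * sqrt mu"
    unfolding r_def th_def using smu0 d1 by (simp add: power_divide field_simps)
  also have "exp 1 * (224 * sqrt mu) * r powr (a - 2) \<le> exp 1 * (224 * rs) * r0 powr (rs / 23 - 2)"
  proof (intro mult_mono)
    have "r powr (a - 2) \<le> r powr (rs / 23 - 2)"
      using rpos rr0 r01 a_ge by (intro powr_mono') auto
    also have "\<dots> \<le> r0 powr (rs / 23 - 2)" using rpos rr0 rs500 by (intro powr_mono2) auto
    finally show "r powr (a - 2) \<le> r0 powr (rs / 23 - 2)" .
  qed (use smu mu1024 rs500 in auto)
  also have "exp 1 * (224 * rs) * r0 powr (rs / 23 - 2) = exp (Gf s)"
  proof -
    have l1: "ln r0 = ln 4 + ln 28 / 2 - ln s / 4"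
    proof -
      have "ln r0 = ln 4 - ln (sqrt (rs / 28))" unfolding r0_def using rs500 by (simp add: ln_div)
      also have "ln (sqrt (rs / 28)) = ln (rs / 28) / 2" using rs500 by (simp add: ln_sqrt)
      also have "ln (rs / 28) = ln rs - ln 28" using rs500 by (simp add: ln_div)
      also have "ln rs = ln s / 2" unfolding rs_def using sbig by (simp add: ln_sqrt)
      finally show ?thesis by (simp add: field_simps)
    qed
    have l2: "ln rs = ln s / 2" unfolding rs_def using sbig by (simp add: ln_sqrt)
    have "exp 1 * (224 * rs) * r0 powr (rs / 23 - 2) =
        exp 1 * exp (ln 224) * exp (ln rs) * exp ((rs / 23 - 2) * ln r0)"
      using rs500 r0pos by (simp add: powr_def mult.commute)
    also have "\<dots> = exp (1 + ln 224 + ln rs + (rs / 23 - 2) * ln r0)" by (simp add: exp_add)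
    also have "\<dots> = exp (Gf s)" unfolding Gf_def l1 l2 rs_def[symmetric] by simp
    finally show ?thesis .
  qed
  also have "\<dots> \<le> exp (- (1/200) * sqrt s * ln s)" using G by simp
  finally show ?thesis .
qed


theorem mainTheorem17:
  fixes p :: "nat \<Rightarrow> real" and N d :: "nat \<Rightarrow> nat"
  assumes p_range: "\<And>n. 0 \<le> p n \<and> p n \<le> 1/2"
    and np_inf: "filterlim (\<lambda>n. real n * p n) at_top sequentially"
    and N_range: "\<And>n. real n - sqrt (real n) \<le> real (N n) \<and> N n \<le> n"
    and d_bound: "\<And>n. real (d n) \<ge> real n * p n / 2"
  shows "\<exists>c>0. \<forall>\<^sub>F n in sequentially.
           multiset_eq_prob (d n) (N n) (p n)
             \<le> exp (- c * sqrt (real n * p n) * ln (real n * p n))"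
proof -
  obtain S0 where S0: "\<And>s. s \<ge> S0 \<Longrightarrow> Gf s \<le> - (1/200) * sqrt s * ln s"
    using Gf_event unfolding eventually_at_top_linorder by blast
  define S1 where "S1 = max S0 250000"
  have ev1: "\<forall>\<^sub>F n in sequentially. S1 \<le> real n * p n"
    using np_inf unfolding filterlim_at_top by blast
  have ev2: "\<forall>\<^sub>F n in sequentially. n \<ge> (4::nat)" by (rule eventually_ge_at_top)
  have "\<forall>\<^sub>F n in sequentially. multiset_eq_prob (d n) (N n) (p n)
             \<le> exp (- (1/200) * sqrt (real n * p n) * ln (real n * p n))"
  proof (rule eventually_mono[OF eventually_conj[OF ev1 ev2]])
    fix n assume n: "S1 \<le> real n * p n \<and> 4 \<le> n"
    show "multiset_eq_prob (d n) (N n) (p n) \<le> exp (- (1/200) * sqrt (real n * p n) * ln (real n * p n))"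
    proof (rule final_n)
      show "0 \<le> p n" "p n \<le> 1/2" using p_range[of n] by auto
      show "4 \<le> n" using n by simp
      show "real n - sqrt (real n) \<le> real (N n)" "N n \<le> n" using N_range[of n] by auto
      show "real (d n) \<ge> real n * p n / 2" by (rule d_bound)
      show "real n * p n \<ge> 250000" using n unfolding S1_def by simp
      show "Gf (real n * p n) \<le> - (1/200) * sqrt (real n * p n) * ln (real n * p n)"
        using n unfolding S1_def by (intro S0) simp
    qed simp
  qed
  thus ?thesis by (intro exI[of _ "1/200"]) auto
qed

end
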